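(* For $i\ge1$ let $$y_i=(1+\alpha)\,\mathbf E\Big[\mathbb I_{\{Z\le i,\ \Lambda\ge 1\}}\frac{\Gamma(i+2\Lambda)}{\Gamma(i+2\Lambda+\alpha+2)}\cdot\frac{\Gamma(Z+2\Lambda+\alpha+1)}{\Gamma(Z+2\Lambda)}\Big].$$ Then, as $i\to\infty$, $$y_i\sim \lambda(1+\alpha)^2\Gamma(2+\alpha)\, i^{-2-\alpha}\ln i,$$ where $a_i\sim b_i$ means $a_i/b_i\to1$.
   Context: Fix $\lambda>0$ and an integer $k\ge1$, and let $\alpha=k/\lambda$. $\Lambda$ is a Poisson random variable with mean $\lambda$; $Z=\sum_{i=1}^{\Lambda}T_i$, where $T_1,T_2,\dots$ are i.i.d., independent of $\Lambda$, with $\mathbf P(T_1=j)=x_{j+1}$, $x_{j+1}=(1+\alpha)\Gamma(2+\alpha)\frac{\Gamma(j+1)}{\Gamma(3+\alpha+j)}$ for $j=0,1,2,\dots$. *)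

theory Defs
  imports "HOL-Analysis.Analysis" "HOL-Library.Landau_Symbols"
begin

text \<open>Law of T: P(T = j) = x_{j+1} = (1+a) Gamma(2+a) Gamma(j+1) / Gamma(3+a+j).\<close>
definition T_prob :: "real \<Rightarrow> nat \<Rightarrow> real" where
  "T_prob a j = (1 + a) * Gamma (2 + a) * Gamma (real j + 1) / Gamma (3 + a + real j)"

fun conv_pow :: "(nat \<Rightarrow> real) \<Rightarrow> nat \<Rightarrow> nat \<Rightarrow> real" where
  "conv_pow p 0 z = (if z = 0 then 1 else 0)"
| "conv_pow p (Suc n) z = (\<Sum>j\<le>z. conv_pow p n (z - j) * p j)"

definition poisson_prob :: "real \<Rightarrow> nat \<Rightarrow> real" where
  "poisson_prob lam n = exp (- lam) * lam ^ n / fact n"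

text \<open>y_i = (1+a) E[ 1{Z<=i, Lambda>=1} G(i+2L)/G(i+2L+a+2) * G(Z+2L+a+1)/G(Z+2L) ],
  with the expectation written out over the joint law of (Lambda, Z):
  P(Lambda = n, Z = z) = poisson_prob lam n * conv_pow (T_prob a) n z.\<close>
definition y_seq :: "real \<Rightarrow> nat \<Rightarrow> nat \<Rightarrow> real" where
  "y_seq lam k i = (let a = real k / lam in
     (1 + a) * (\<Sum>n. if n \<ge> 1 then poisson_prob lam n *
        (\<Sum>z\<le>i. conv_pow (T_prob a) n z *
           (Gamma (real i + 2 * real n) / Gamma (real i + 2 * real n + a + 2)) *
           (Gamma (real z + 2 * real n + a + 1) / Gamma (real z + 2 * real n)))
      else 0))"

end

theory Submission imports Defs "HOL-Real_Asymp.Real_Asymp" begin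

lemma gauss0:
  fixes s :: real assumes "s > 0"
  shows "(\<lambda>n. Gamma (real n + 1) * real n powr s / Gamma (real n + 1 + s)) \<longlonglongrightarrow> 1"
proof -
  have ns: "s \<notin> \<int>\<^sub>\<le>\<^sub>0" using assms by (auto elim!: nonpos_Ints_cases)
  have gp: "Gamma s > 0" using assms by simp
  have "(\<lambda>n. Gamma_series s n / Gamma s) \<longlonglongrightarrow> Gamma s / Gamma s"
    by (intro tendsto_intros) (use gp in auto)
  hence L: "(\<lambda>n. Gamma_series s n / Gamma s) \<longlonglongrightarrow> 1" using gp by simp
  have "eventually (\<lambda>n. Gamma_series s n / Gamma s = Gamma (real n + 1) * real n powr s / Gamma (real n + 1 + s)) sequentially"
  proof (rule eventually_sequentiallyI[of 1])
    fix n :: nat assume "n \<ge> 1"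
    have g1: "Gamma (real n + 1) = fact n" using Gamma_fact[of n] by (simp add: add.commute)
    have "pochhammer s (n+1) = Gamma (s + real (n+1)) / Gamma s" by (rule pochhammer_Gamma[OF ns])
    moreover have "Gamma (s + real (n+1)) > 0" using assms by simp
    ultimately show "Gamma_series s n / Gamma s = Gamma (real n + 1) * real n powr s / Gamma (real n + 1 + s)"
      using \<open>n \<ge> 1\<close> gp unfolding Gamma_series_def g1
      by (simp add: powr_def field_simps add_ac)
  qed
  from tendsto_cong[OF this] L show ?thesis by simp
qed

lemma ratio_lim:
  fixes u v e :: real assumes "v \<ge> 0" "u \<ge> 0"
  shows "(\<lambda>i. ((real i + u) / (real i + v)) powr e) \<longlonglongrightarrow> 1"
proof -
  have "(\<lambda>i. (real i + u) / (real i + v)) \<longlonglongrightarrow> 1"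
    using assms by real_asymp
  from tendsto_powr[OF this tendsto_const, of e] show ?thesis by simp
qed

lemma gaussG:
  fixes s r :: real and m :: nat assumes "s > 0" "m \<ge> 1" "r \<ge> 0"
  shows "(\<lambda>n. Gamma (real n + real m) * (real n + r) powr s / Gamma (real n + real m + s)) \<longlonglongrightarrow> 1"
proof -
  have A: "(\<lambda>n. Gamma (real (n + (m-1)) + 1) * real (n + (m-1)) powr s / Gamma (real (n + (m-1)) + 1 + s)) \<longlonglongrightarrow> 1"
    using LIMSEQ_ignore_initial_segment[OF gauss0[OF assms(1)], of "m-1"] by simp
  have B: "(\<lambda>n. ((real n + r) / (real n + (real m - 1))) powr s) \<longlonglongrightarrow> 1"
    by (rule ratio_lim) (use assms in auto)
  have "(\<lambda>n. (Gamma (real (n + (m-1)) + 1) * real (n + (m-1)) powr s / Gamma (real (n + (m-1)) + 1 + s))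
     * ((real n + r) / (real n + (real m - 1))) powr s) \<longlonglongrightarrow> 1 * 1"
    by (intro tendsto_mult A B)
  moreover have "eventually (\<lambda>n. (Gamma (real (n + (m-1)) + 1) * real (n + (m-1)) powr s / Gamma (real (n + (m-1)) + 1 + s))
     * ((real n + r) / (real n + (real m - 1))) powr s = Gamma (real n + real m) * (real n + r) powr s / Gamma (real n + real m + s)) sequentially"
  proof (rule eventually_sequentiallyI[of 1])
    fix n :: nat assume n: "n \<ge> 1"
    have e1: "real (n + (m-1)) + 1 = real n + real m" using assms by (simp add: of_nat_diff)
    have e2: "real (n + (m-1)) = real n + (real m - 1)" using assms by (simp add: of_nat_diff)
    have pos: "real n + (real m - 1) > 0" using n assms by simp
    have "((real n + r) / (real n + (real m - 1))) powr s = (real n + r) powr s / (real n + (real m - 1)) powr s"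
      using pos assms by (simp add: powr_divide)
    moreover have "(real n + (real m - 1)) powr s > 0" using pos by simp
    ultimately show "(Gamma (real (n + (m-1)) + 1) * real (n + (m-1)) powr s / Gamma (real (n + (m-1)) + 1 + s))
     * ((real n + r) / (real n + (real m - 1))) powr s = Gamma (real n + real m) * (real n + r) powr s / Gamma (real n + real m + s)"
      unfolding e1 e2 by (simp add: field_simps)
  qed
  ultimately show ?thesis using tendsto_cong by fastforce
qed

lemma gamma_ratio_bounds:
  fixes s :: real assumes "s > 0"
  obtains C where "C > 0" "\<And>x::nat. x \<ge> 1 \<Longrightarrow> Gamma (real x) * real x powr s / Gamma (real x + s) \<le> C"
    "\<And>x::nat. x \<ge> 1 \<Longrightarrow> Gamma (real x + s) / (Gamma (real x) * real x powr s) \<le> C"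
proof -
  define h where "h n = Gamma (real n + real (1::nat)) * (real n + 1) powr s / Gamma (real n + real (1::nat) + s)" for n
  have L: "h \<longlonglongrightarrow> 1" unfolding h_def by (rule gaussG) (use assms in auto)
  have L2: "(\<lambda>n. inverse (h n)) \<longlonglongrightarrow> inverse 1" by (intro tendsto_intros L) simp
  obtain C1 where C1: "C1 > 0" "\<And>n. norm (h n) \<le> C1" using convergent_imp_Bseq[OF convergentI[OF L]] BseqE by metis
  obtain C2 where C2: "C2 > 0" "\<And>n. norm (inverse (h n)) \<le> C2" using convergent_imp_Bseq[OF convergentI[OF L2]] BseqE by metis
  show ?thesis
  proof (rule that[of "max C1 C2"])
    show "max C1 C2 > 0" using C1 by simp
    fix x :: nat assume x: "x \<ge> 1"
    then obtain n where n: "x = n + 1" by (metis add.commute le_Suc_ex)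
    have hx: "h n = Gamma (real x) * real x powr s / Gamma (real x + s)" unfolding h_def n by (simp add: add_ac)
    have pos: "Gamma (real x) * real x powr s / Gamma (real x + s) > 0" using x assms by simp
    have hp: "h n > 0" using hx pos by simp
    have "h n \<le> C1" using C1(2)[of n] hp by (metis abs_of_pos real_norm_def)
    then show "Gamma (real x) * real x powr s / Gamma (real x + s) \<le> max C1 C2"
      using hx by simp
    show "Gamma (real x + s) / (Gamma (real x) * real x powr s) \<le> max C1 C2"
    proof -
      have "inverse (h n) \<le> C2" using C2(2)[of n] hp by (metis abs_of_pos real_norm_def positive_imp_inverse_positive)
      then show ?thesis using hx by (simp add: field_simps)
    qed
  qed
qed

lemma wcesaro:
  fixes e :: "nat \<Rightarrow> real" assumes "e \<longlonglongrightarrow> 0"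
  shows "(\<lambda>i. (\<Sum>z=1..i. e z / real z) / harm i) \<longlonglongrightarrow> 0"
proof (rule LIMSEQ_I)
  fix r :: real assume r: "r > 0"
  obtain Z where Z: "\<And>z. z \<ge> Z \<Longrightarrow> norm (e z - 0) < r/2"
    using LIMSEQ_D[OF assms, of "r/2"] r by auto
  define A where "A = (\<Sum>z=1..Z. \<bar>e z\<bar> / real z)"
  have A0: "A \<ge> 0" unfolding A_def by (intro sum_nonneg) auto
  have "eventually (\<lambda>i. harm i \<ge> 2*A/r + 1) sequentially"
    using harm_at_top unfolding filterlim_at_top by blast
  then obtain N where N: "\<And>i. i \<ge> N \<Longrightarrow> harm i \<ge> 2*A/r + 1"
    unfolding eventually_sequentially by blast
  show "\<exists>no. \<forall>n\<ge>no. norm ((\<Sum>z=1..n. e z / real z) / harm n - 0) < r"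
  proof (intro exI[of _ "max N Z"] allI impI)
    fix i assume i: "i \<ge> max N Z"
    have hi: "harm i \<ge> 2*A/r + 1" using N i by simp
    have hpos: "(harm i :: real) > 0"
    proof -
      have "2*A/r + 1 > 0" using A0 r by (simp add: field_simps)
      then show ?thesis using hi by linarith
    qed
    have pt: "\<bar>e z\<bar> / real z \<le> (if z \<le> Z then \<bar>e z\<bar> / real z else 0) + (r/2) / real z" if "z \<ge> 1" for z
    proof (cases "z \<le> Z")
      case True then show ?thesis using r that by simp
    next
      case False
      then have "\<bar>e z\<bar> \<le> r/2" using Z[of z] by simp
      then have "\<bar>e z\<bar> / real z \<le> (r/2) / real z" by (rule divide_right_mono) simp
      then show ?thesis using False by simp
    qed
    have "\<bar>\<Sum>z=1..i. e z / real z\<bar> \<le> (\<Sum>z=1..i. \<bar>e z\<bar> / real z)"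
      by (rule order_trans[OF sum_abs]) simp
    also have "\<dots> \<le> (\<Sum>z=1..i. (if z \<le> Z then \<bar>e z\<bar> / real z else 0) + (r/2) / real z)"
      by (intro sum_mono pt) auto
    also have "\<dots> = (\<Sum>z=1..i. (if z \<le> Z then \<bar>e z\<bar> / real z else 0)) + (r/2) * harm i"
    proof -
      have "(\<Sum>z=1..i. (r/2) / real z) = r/2 * harm i"
        unfolding harm_def sum_distrib_left by (rule sum.cong[OF refl]) (rule divide_inverse)
      then show ?thesis by (simp only: sum.distrib)
    qed
    also have "(\<Sum>z=1..i. (if z \<le> Z then \<bar>e z\<bar> / real z else 0)) = (\<Sum>z=1..Z. (if z \<le> Z then \<bar>e z\<bar> / real z else 0))"
      by (rule sum.mono_neutral_right) (use i in auto)
    also have "\<dots> = A" unfolding A_def by (rule sum.cong) auto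
    finally have bnd: "\<bar>\<Sum>z=1..i. e z / real z\<bar> \<le> A + r/2 * harm i" .
    have "A < r/2 * harm i"
    proof -
      have "2*A/r < harm i" using hi by linarith
      then show ?thesis using r by (simp add: field_simps)
    qed
    with bnd have "\<bar>\<Sum>z=1..i. e z / real z\<bar> < r * harm i" by linarith
    then show "norm ((\<Sum>z=1..i. e z / real z) / harm i - 0) < r"
      using hpos by (simp add: abs_divide divide_less_eq)
  qed
qed

lemma harm_ln_lim: "(\<lambda>i. harm i / ln (real i)) \<longlonglongrightarrow> 1"
proof -
  have l: "filterlim (\<lambda>i. ln (real i)) at_top sequentially" by real_asymp
  have "(\<lambda>i. (harm i - ln (real i)) / ln (real i)) \<longlonglongrightarrow> 0"
    by (rule tendsto_divide_0[OF euler_mascheroni_LIMSEQ]) (use l filterlim_at_top_imp_at_infinity in auto)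
  then have "(\<lambda>i. 1 + (harm i - ln (real i)) / ln (real i)) \<longlonglongrightarrow> 1 + 0" by (intro tendsto_add) auto
  moreover have "eventually (\<lambda>i. 1 + (harm i - ln (real i)) / ln (real i) = harm i / ln (real i)) sequentially"
  proof -
    have "eventually (\<lambda>i. ln (real i) > 0) sequentially" using l by (simp add: filterlim_at_top_dense)
    then show ?thesis
    proof eventually_elim
      case (elim i) then show ?case by (simp add: field_simps)
    qed
  qed
  ultimately show ?thesis using tendsto_cong by fastforce
qed

lemma cesaro_ln:
  fixes d :: "nat \<Rightarrow> real" assumes "(\<lambda>z. real z * d z) \<longlonglongrightarrow> L"
  shows "(\<lambda>i. (\<Sum>z\<le>i. d z) / ln (real i)) \<longlonglongrightarrow> L"
proof -
  define e where "e z = real z * d z - L" for z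
  have e0: "e \<longlonglongrightarrow> 0" unfolding e_def using tendsto_diff[OF assms tendsto_const[of L]] by simp
  have l: "filterlim (\<lambda>i. ln (real i)) at_top sequentially" by real_asymp
  have t1: "(\<lambda>i. d 0 / ln (real i)) \<longlonglongrightarrow> 0"
    by (rule tendsto_divide_0[OF tendsto_const]) (use l filterlim_at_top_imp_at_infinity in auto)
  have t2: "(\<lambda>i. ((\<Sum>z=1..i. e z / real z) / harm i) * (harm i / ln (real i))) \<longlonglongrightarrow> 0 * 1"
    by (intro tendsto_mult wcesaro e0 harm_ln_lim)
  have t3: "(\<lambda>i. L * (harm i / ln (real i))) \<longlonglongrightarrow> L * 1"
    by (intro tendsto_mult tendsto_const harm_ln_lim)
  have "(\<lambda>i. d 0 / ln (real i) + ((\<Sum>z=1..i. e z / real z) / harm i) * (harm i / ln (real i)) + L * (harm i / ln (real i))) \<longlonglongrightarrow> 0 + 0 * 1 + L * 1"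
    by (intro tendsto_add t1 t2 t3)
  moreover have "eventually (\<lambda>i. d 0 / ln (real i) + ((\<Sum>z=1..i. e z / real z) / harm i) * (harm i / ln (real i)) + L * (harm i / ln (real i)) = (\<Sum>z\<le>i. d z) / ln (real i)) sequentially"
  proof (rule eventually_sequentiallyI[of 1])
    fix i :: nat assume i: "i \<ge> 1"
    have hp: "(harm i :: real) > 0" using i by simp
    have s1: "(\<Sum>z\<le>i. d z) = d 0 + (\<Sum>z=1..i. d z)"
      by (simp add: atMost_atLeast0 sum.atLeast_Suc_atMost)
    have s2: "(\<Sum>z=1..i. d z) = (\<Sum>z=1..i. e z / real z) + L * harm i"
    proof -
      have "(\<Sum>z=1..i. d z) = (\<Sum>z=1..i. e z / real z + L * inverse (real z))"
        by (rule sum.cong) (auto simp: e_def field_simps)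
      then show ?thesis by (simp add: sum.distrib harm_def sum_distrib_left)
    qed
    show "d 0 / ln (real i) + ((\<Sum>z=1..i. e z / real z) / harm i) * (harm i / ln (real i)) + L * (harm i / ln (real i)) = (\<Sum>z\<le>i. d z) / ln (real i)"
    proof -
      have "((\<Sum>z=1..i. e z / real z) / harm i) * (harm i / ln (real i)) = (\<Sum>z=1..i. e z / real z) / ln (real i)"
        using hp by (auto simp del: harm_pos_iff)
      then show ?thesis unfolding s1 s2 by (simp add: add_divide_distrib)
    qed
  qed
  ultimately show ?thesis using tendsto_cong by fastforce
qed



lemma Gamma_rec: "x > (0::real) \<Longrightarrow> Gamma (x + 1) = x * Gamma x"
  by (rule Gamma_plus1) (auto elim!: nonpos_Ints_cases)

lemma P_pos: "a > 0 \<Longrightarrow> T_prob a j > 0"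
  unfolding T_prob_def by (simp add: add_pos_pos)

lemma P_lim:
  assumes "a > 0"
  shows "(\<lambda>j. T_prob a j * (real j + 1) powr (2+a)) \<longlonglongrightarrow> (1+a) * Gamma (2+a)"
proof -
  have "(\<lambda>j. (1+a) * Gamma (2+a) * (Gamma (real j + real (1::nat)) * (real j + 1) powr (2+a) / Gamma (real j + real (1::nat) + (2+a))))
     \<longlonglongrightarrow> (1+a) * Gamma (2+a) * 1"
    by (intro tendsto_mult tendsto_const gaussG) (use assms in auto)
  moreover have "(1+a) * Gamma (2+a) * (Gamma (real j + real (1::nat)) * (real j + 1) powr (2+a) / Gamma (real j + real (1::nat) + (2+a)))
     = T_prob a j * (real j + 1) powr (2+a)" for j
    unfolding T_prob_def by (simp add: add_ac)
  ultimately show ?thesis by simp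
qed

lemma P_sums:
  assumes "a > 0"
  shows "T_prob a sums 1"
proof -
  define t where "t j = Gamma (real j + 1) / Gamma (real j + 2 + a)" for j :: nat
  have g: "(\<lambda>j. Gamma (real j + real (1::nat)) * (real j + 1) powr (1+a) / Gamma (real j + real (1::nat) + (1+a))) \<longlonglongrightarrow> 1"
    by (rule gaussG) (use assms in auto)
  have z: "(\<lambda>j. (real j + 1) powr (-(1+a))) \<longlonglongrightarrow> 0"
    using assms by real_asymp
  have "(\<lambda>j. (Gamma (real j + real (1::nat)) * (real j + 1) powr (1+a) / Gamma (real j + real (1::nat) + (1+a))) * (real j + 1) powr (-(1+a))) \<longlonglongrightarrow> 1 * 0"
    by (intro tendsto_mult g z)
  moreover have "(Gamma (real j + real (1::nat)) * (real j + 1) powr (1+a) / Gamma (real j + real (1::nat) + (1+a))) * (real j + 1) powr (-(1+a)) = t j" for j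
  proof -
    have "(real j + 1) powr (1+a) * (real j + 1) powr (-(1+a)) = 1"
      by (simp add: powr_add[symmetric])
    then show ?thesis unfolding t_def by (simp add: add_ac field_simps)
  qed
  ultimately have t0: "t \<longlonglongrightarrow> 0" by simp
  have tel: "(\<lambda>n. t n - t (Suc n)) sums (t 0 - 0)" by (rule telescope_sums'[OF t0])
  have eq: "T_prob a j = Gamma (2+a) * (t j - t (Suc j))" for j
  proof -
    have x1: "Gamma (real j + 3 + a) = (real j + 2 + a) * Gamma (real j + 2 + a)"
      using Gamma_rec[of "real j + 2 + a"] assms by (simp add: add_ac)
    have x2: "Gamma (real j + 2) = (real j + 1) * Gamma (real j + 1)"
      using Gamma_rec[of "real j + 1"] by (simp add: add_ac)
    have p1: "Gamma (real j + 2 + a) > 0" using assms by (simp add: add_pos_pos)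
    have p2: "real j + 2 + a > 0" using assms by simp
    have "t j - t (Suc j) = Gamma (real j + 1) / Gamma (real j + 2 + a) - Gamma (real j + 2) / Gamma (real j + 3 + a)"
      unfolding t_def by (simp add: add_ac)
    also have "\<dots> = (1+a) * Gamma (real j + 1) / Gamma (real j + 3 + a)"
    proof -
      have alg: "H / G - (x + 1) * H / ((x + 2 + a) * G) = (1+a) * H / ((x + 2 + a) * G)"
        if "G > 0" "x + 2 + a > 0" for G H x :: real
      proof -
        have "H / G - (y - 1 - a) * H / (y * G) = (1+a) * H / (y * G)" if "y > 0" for y
          using that \<open>G > 0\<close> by (simp add: field_simps)
        from this[of "x + 2 + a"] that show ?thesis by (simp add: algebra_simps)
      qed
      show ?thesis unfolding x1 x2 using alg[OF p1 p2] by simp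
    qed
    finally show ?thesis unfolding T_prob_def by (simp add: add_ac)
  qed
  have "t 0 = 1 / Gamma (2+a)" unfolding t_def by (simp add: add_ac)
  moreover have "Gamma (2+a) > 0" using assms by (simp add: add_pos_pos)
  ultimately show ?thesis using sums_mult[OF tel, of "Gamma (2+a)"] unfolding eq[abs_def] by simp
qed




lemma conv_nonneg: "(\<And>j. p j \<ge> 0) \<Longrightarrow> conv_pow p n z \<ge> 0"
  by (induction n arbitrary: z) (auto intro!: sum_nonneg mult_nonneg_nonneg)

lemma conv_sums:
  assumes "\<And>j. p j \<ge> (0::real)" "p sums 1"
  shows "conv_pow p n sums 1"
proof (induction n)
  case 0
  have "(\<lambda>z. if z = 0 then 1 else 0) sums (1::real)"
    using sums_single[of 0 "\<lambda>_. 1::real"] by simp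
  then show ?case by simp
next
  case (Suc n)
  have s1: "summable (\<lambda>k. norm (p k))" using assms by (simp add: sums_summable)
  have s2: "summable (\<lambda>k. norm (conv_pow p n k))"
    using Suc conv_nonneg[of p n] assms by (simp add: sums_summable)
  have "(\<lambda>k. \<Sum>i\<le>k. p i * conv_pow p n (k - i)) sums ((\<Sum>k. p k) * (\<Sum>k. conv_pow p n k))"
    by (rule Cauchy_product_sums[OF s1 s2])
  moreover have "(\<Sum>k. p k) = 1" "(\<Sum>k. conv_pow p n k) = 1"
    using assms Suc by (simp_all add: sums_iff)
  ultimately show ?case by (simp add: mult.commute)
qed

lemma sum_rev_atMost: "(\<Sum>j\<le>(i::nat). g (i - j)) = (\<Sum>j\<le>i. (g j :: real))"
  by (rule sum.reindex_bij_witness[where i="\<lambda>j. i - j" and j="\<lambda>j. i - j"]) auto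

lemma w_le:
  assumes "e \<ge> 0" "real i + 1 \<le> 2 * (real j + 1)"
  shows "(real i + 1) powr e \<le> 2 powr e * (real j + 1) powr e"
proof -
  have "(real i + 1) powr e \<le> (2 * (real j + 1)) powr e"
    by (rule powr_mono2) (use assms in auto)
  also have "\<dots> = 2 powr e * (real j + 1) powr e" by (rule powr_mult; simp)
  finally show ?thesis .
qed

lemma w_shift:
  assumes "e > 0"
  shows "(real (i + k) + 1) powr e = (real (i + l) + 1) powr e * ((real i + (real k + 1)) / (real i + (real l + 1))) powr e"
proof -
  have "((real i + (real k + 1)) / (real i + (real l + 1))) powr e = (real i + (real k + 1)) powr e / (real i + (real l + 1)) powr e"
    by (rule powr_divide; simp)
  moreover have "(real i + (real l + 1)) powr e > 0" by simp
  ultimately show ?thesis by (simp add: add_ac)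
qed




lemma conv_step:
  fixes p q :: "nat \<Rightarrow> real" and e c L P Q :: real
  assumes e: "e > 0"
  and p0: "\<And>j. p j \<ge> 0" and ps: "p sums 1" and pl: "(\<lambda>j. p j * (real j + 1) powr e) \<longlonglongrightarrow> c"
  and pb: "\<And>j. p j * (real j + 1) powr e \<le> P"
  and q0: "\<And>j. q j \<ge> 0" and qs: "q sums 1" and ql: "(\<lambda>j. q j * (real j + 1) powr e) \<longlonglongrightarrow> L"
  and qb: "\<And>j. q j * (real j + 1) powr e \<le> Q"
  shows "(\<lambda>i. (\<Sum>j\<le>i. q (i - j) * p j) * (real i + 1) powr e) \<longlonglongrightarrow> L + c"
    and "(\<Sum>j\<le>i. q (i - j) * p j) * (real i + 1) powr e \<le> 2 powr e * (Q + P)"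
proof -
  define w where "w i = (real i + 1) powr e" for i :: nat
  define r where "r i = (\<Sum>j\<le>i. q (i - j) * p j)" for i
  define A where "A i j = (if 2*j \<le> i then p j * (q (i - j) * w i) else 0)" for i j :: nat
  define B where "B i m = (if 2*m < i then q m * (p (i - m) * w i) else 0)" for i m :: nat
  have wpos: "w i > 0" for i unfolding w_def by simp
  have decomp: "r i * w i = (\<Sum>j\<le>i. A i j) + (\<Sum>m\<le>i. B i m)" for i
  proof -
    have "r i * w i = (\<Sum>j\<le>i. q (i-j) * p j * w i)" by (simp add: r_def sum_distrib_right)
    also have "\<dots> = (\<Sum>j\<le>i. A i j + (if 2*j > i then q (i-j) * p j * w i else 0))"
      by (rule sum.cong) (auto simp: A_def mult_ac)
    also have "\<dots> = (\<Sum>j\<le>i. A i j) + (\<Sum>j\<le>i. (if 2*j > i then q (i-j) * p j * w i else 0))"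
      by (rule sum.distrib)
    also have "(\<Sum>j\<le>i. (if 2*j > i then q (i-j) * p j * w i else 0))
        = (\<Sum>j\<le>i. (if 2*(i-j) > i then q (i-(i-j)) * p (i-j) * w i else 0))"
      by (rule sum_rev_atMost[of "\<lambda>x. if 2*x > i then q (i-x) * p x * w i else 0" i, symmetric])
    also have "\<dots> = (\<Sum>m\<le>i. B i m)"
      by (rule sum.cong) (auto simp: B_def mult_ac)
    finally show ?thesis .
  qed
  have sA: "(\<Sum>j. A i j) = (\<Sum>j\<le>i. A i j)" for i by (rule suminf_finite) (auto simp: A_def)
  have sB: "(\<Sum>j. B i j) = (\<Sum>j\<le>i. B i j)" for i by (rule suminf_finite) (auto simp: B_def)
  have Q0: "Q \<ge> 0" using qb[of 0] q0[of 0] wpos[of 0] unfolding w_def by (meson mult_nonneg_nonneg order_trans less_imp_le)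
  have P0: "P \<ge> 0" using pb[of 0] p0[of 0] wpos[of 0] unfolding w_def by (meson mult_nonneg_nonneg order_trans less_imp_le)
  have Ab: "norm (A i j) \<le> p j * (2 powr e * Q)" for i j
  proof (cases "2*j \<le> i")
    case True
    have "w i \<le> 2 powr e * w (i - j)" unfolding w_def by (rule w_le) (use e True in auto)
    then have "q (i-j) * w i \<le> q (i-j) * (2 powr e * w (i-j))" by (rule mult_left_mono) (rule q0)
    also have "\<dots> = 2 powr e * (q (i-j) * w (i-j))" by simp
    also have "\<dots> \<le> 2 powr e * Q" using qb[of "i-j"] unfolding w_def by simp
    finally have "q (i-j) * w i \<le> 2 powr e * Q" .
    moreover have "q (i-j) * w i \<ge> 0" using q0 wpos by (simp add: less_imp_le)
    ultimately show ?thesis using True p0[of j] by (simp add: A_def abs_mult mult_left_mono)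
  qed (simp add: A_def Q0 p0)
  have Bb: "norm (B i m) \<le> q m * (2 powr e * P)" for i m
  proof (cases "2*m < i")
    case True
    have "w i \<le> 2 powr e * w (i - m)" unfolding w_def by (rule w_le) (use e True in auto)
    then have "p (i-m) * w i \<le> p (i-m) * (2 powr e * w (i-m))" by (rule mult_left_mono) (rule p0)
    also have "\<dots> = 2 powr e * (p (i-m) * w (i-m))" by simp
    also have "\<dots> \<le> 2 powr e * P" using pb[of "i-m"] unfolding w_def by simp
    finally have "p (i-m) * w i \<le> 2 powr e * P" .
    moreover have "p (i-m) * w i \<ge> 0" using p0 wpos by (simp add: less_imp_le)
    ultimately show ?thesis using True q0[of m] by (simp add: B_def abs_mult mult_left_mono)
  qed (simp add: B_def P0 q0)
  have Al: "(\<lambda>i. A i j) \<longlonglongrightarrow> p j * L" for j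
  proof -
    have "(\<lambda>i. A (i + 2*j) j) \<longlonglongrightarrow> p j * L"
    proof -
      have 1: "(\<lambda>i. q (i + j) * w (i + j)) \<longlonglongrightarrow> L"
        using LIMSEQ_ignore_initial_segment[OF ql, of j] by (simp add: w_def)
      have 2: "(\<lambda>i. ((real i + (real (2*j) + 1)) / (real i + (real j + 1))) powr e) \<longlonglongrightarrow> 1"
        by (rule ratio_lim) auto
      have "(\<lambda>i. p j * ((q (i + j) * w (i + j)) * ((real i + (real (2*j) + 1)) / (real i + (real j + 1))) powr e)) \<longlonglongrightarrow> p j * (L * 1)"
        by (intro tendsto_mult tendsto_const 1 2)
      moreover have "A (i + 2*j) j = p j * ((q (i + j) * w (i + j)) * ((real i + (real (2*j) + 1)) / (real i + (real j + 1))) powr e)" for i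
      proof -
        have "i + 2 * j - j = i + j" by simp
        then show ?thesis using w_shift[OF e, of i "2*j" j] by (simp add: A_def w_def mult_ac add_ac)
      qed
      ultimately show ?thesis by simp
    qed
    then show ?thesis by (rule LIMSEQ_offset)
  qed
  have Bl: "(\<lambda>i. B i m) \<longlonglongrightarrow> q m * c" for m
  proof -
    have "(\<lambda>i. B (i + (2*m+1)) m) \<longlonglongrightarrow> q m * c"
    proof -
      have 1: "(\<lambda>i. p (i + (m+1)) * w (i + (m+1))) \<longlonglongrightarrow> c"
        using LIMSEQ_ignore_initial_segment[OF pl, of "m+1"] by (simp add: w_def)
      have 2: "(\<lambda>i. ((real i + (real (2*m+1) + 1)) / (real i + (real (m+1) + 1))) powr e) \<longlonglongrightarrow> 1"
        by (rule ratio_lim) auto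
      have "(\<lambda>i. q m * ((p (i + (m+1)) * w (i + (m+1))) * ((real i + (real (2*m+1) + 1)) / (real i + (real (m+1) + 1))) powr e)) \<longlonglongrightarrow> q m * (c * 1)"
        by (intro tendsto_mult tendsto_const 1 2)
      moreover have "B (i + (2*m+1)) m = q m * ((p (i + (m+1)) * w (i + (m+1))) * ((real i + (real (2*m+1) + 1)) / (real i + (real (m+1) + 1))) powr e)" for i
      proof -
        have "i + (2 * m + 1) - m = i + (m + 1)" by simp
        then show ?thesis using w_shift[OF e, of i "2*m+1" "m+1"] by (simp add: B_def w_def mult_ac add_ac)
      qed
      ultimately show ?thesis by simp
    qed
    then show ?thesis by (rule LIMSEQ_offset)
  qed
  have sumM1: "summable (\<lambda>j. p j * (2 powr e * Q))" by (intro summable_mult2 sums_summable[OF ps])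
  have sumM2: "summable (\<lambda>j. q j * (2 powr e * P))" by (intro summable_mult2 sums_summable[OF qs])
  have TA: "(\<lambda>i. \<Sum>j. A i j) \<longlonglongrightarrow> (\<Sum>j. p j * L)"
    using tannerys_theorem[where a="\<lambda>j i. A i j" and M="\<lambda>j. p j * (2 powr e * Q)" and b="\<lambda>j. p j * L" and F=sequentially]
      Al Ab sumM1 by (auto intro: always_eventually)
  have TB: "(\<lambda>i. \<Sum>j. B i j) \<longlonglongrightarrow> (\<Sum>j. q j * c)"
    using tannerys_theorem[where a="\<lambda>j i. B i j" and M="\<lambda>j. q j * (2 powr e * P)" and b="\<lambda>j. q j * c" and F=sequentially]
      Bl Bb sumM2 by (auto intro: always_eventually)
  have e1: "(\<Sum>j. p j * L) = L" using sums_mult2[OF ps, of L] by (simp add: sums_iff)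
  have e2: "(\<Sum>j. q j * c) = c" using sums_mult2[OF qs, of c] by (simp add: sums_iff)
  have "(\<lambda>i. (\<Sum>j. A i j) + (\<Sum>j. B i j)) \<longlonglongrightarrow> L + c"
    using tendsto_add[OF TA TB] unfolding e1 e2 .
  moreover have "(\<Sum>j. A i j) + (\<Sum>j. B i j) = r i * w i" for i unfolding sA sB decomp ..
  ultimately show "(\<lambda>i. (\<Sum>j\<le>i. q (i - j) * p j) * (real i + 1) powr e) \<longlonglongrightarrow> L + c"
    by (simp add: r_def w_def)
  have "r i * w i \<le> (\<Sum>j\<le>i. p j * (2 powr e * Q)) + (\<Sum>m\<le>i. q m * (2 powr e * P))"
    unfolding decomp by (intro add_mono sum_mono) (use Ab Bb in \<open>force dest: abs_le_D1\<close>)+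
  also have "\<dots> = (2 powr e * Q) * (\<Sum>j\<le>i. p j) + (2 powr e * P) * (\<Sum>m\<le>i. q m)"
    by (simp add: sum_distrib_left sum_distrib_right mult.commute mult.left_commute)
  also have "\<dots> \<le> (2 powr e * Q) * 1 + (2 powr e * P) * 1"
  proof (intro add_mono mult_left_mono)
    show "(\<Sum>j\<le>i. p j) \<le> 1" using sum_le_suminf[OF sums_summable[OF ps], of "{..i}"] p0 ps by (simp add: sums_iff)
    show "(\<Sum>j\<le>i. q j) \<le> 1" using sum_le_suminf[OF sums_summable[OF qs], of "{..i}"] q0 qs by (simp add: sums_iff)
  qed (use P0 Q0 in auto)
  finally show "(\<Sum>j\<le>i. q (i - j) * p j) * (real i + 1) powr e \<le> 2 powr e * (Q + P)"
    by (simp add: r_def w_def algebra_simps)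
qed




lemma local_asymp:
  assumes a: "a > 0"
  obtains K where "K \<ge> 1" "\<And>n i. conv_pow (T_prob a) n i * (real i + 1) powr (2+a) \<le> K^n"
     "\<And>n. (\<lambda>i. conv_pow (T_prob a) n i * (real i + 1) powr (2+a)) \<longlonglongrightarrow> real n * ((1+a)*Gamma(2+a))"
proof -
  define p where "p = T_prob a"
  define e where "e = 2 + a"
  define c where "c = (1+a)*Gamma(2+a)"
  have e: "e > 0" using a by (simp add: e_def)
  have p0: "\<And>j. p j \<ge> 0" using P_pos[OF a] by (simp add: p_def less_imp_le)
  have ps: "p sums 1" using P_sums[OF a] by (simp add: p_def)
  have pl: "(\<lambda>j. p j * (real j + 1) powr e) \<longlonglongrightarrow> c" using P_lim[OF a] by (simp add: p_def e_def c_def)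
  obtain P where P: "P > 0" "\<And>j. norm (p j * (real j + 1) powr e) \<le> P"
    using BseqD[OF convergent_imp_Bseq[OF convergentI[OF pl]]] by blast
  have pb: "\<And>j. p j * (real j + 1) powr e \<le> P" using P(2) abs_le_D1 real_norm_def by metis
  define K where "K = 2 powr e * (1 + P)"
  have K1: "K \<ge> 1"
  proof -
    have "2 powr e \<ge> 1" using e by (intro ge_one_powr_ge_zero) auto
    moreover have "1 + P \<ge> 1" using P by simp
    ultimately show ?thesis unfolding K_def by (metis mult_mono' mult_1 order.trans zero_le_one)
  qed
  have main: "(\<forall>i. conv_pow p n i * (real i + 1) powr e \<le> K^n) \<and>
     (\<lambda>i. conv_pow p n i * (real i + 1) powr e) \<longlonglongrightarrow> real n * c" for n
  proof (induction n)
    case 0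
    have "(\<lambda>i. conv_pow p 0 (i + 1) * (real (i + 1) + 1) powr e) \<longlonglongrightarrow> 0" by simp
    then have "(\<lambda>i. conv_pow p 0 i * (real i + 1) powr e) \<longlonglongrightarrow> 0" by (rule LIMSEQ_offset)
    then show ?case by simp
  next
    case (Suc n)
    have q0: "\<And>j. conv_pow p n j \<ge> 0" by (rule conv_nonneg) (rule p0)
    have qs: "conv_pow p n sums 1" by (rule conv_sums) (use p0 ps in auto)
    have qb: "\<And>j. conv_pow p n j * (real j + 1) powr e \<le> K^n" using Suc.IH by blast
    have ql: "(\<lambda>j. conv_pow p n j * (real j + 1) powr e) \<longlonglongrightarrow> real n * c" using Suc.IH by blast
    note st = conv_step[OF e p0 ps pl pb q0 qs ql qb]
    have Kn: "K^n \<ge> 1" using K1 by simp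
    have "(\<forall>i. conv_pow p (Suc n) i * (real i + 1) powr e \<le> K^Suc n)"
    proof
      fix i
      have "conv_pow p (Suc n) i * (real i + 1) powr e \<le> 2 powr e * (K^n + P)"
        using st(2)[of i] by simp
      also have "\<dots> \<le> 2 powr e * ((1 + P) * K^n)"
      proof -
        have "P \<le> P * K^n" using P Kn by simp
        then show ?thesis by (intro mult_left_mono) (auto simp: algebra_simps)
      qed
      also have "\<dots> = K^Suc n" by (simp add: K_def)
      finally show "conv_pow p (Suc n) i * (real i + 1) powr e \<le> K^Suc n" .
    qed
    moreover have "(\<lambda>i. conv_pow p (Suc n) i * (real i + 1) powr e) \<longlonglongrightarrow> real (Suc n) * c"
      using st(1) by (simp add: algebra_simps)
    ultimately show ?case by blast
  qed
  show ?thesis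
    by (rule that[OF K1]) (use main in \<open>simp_all add: p_def e_def c_def\<close>)
qed




lemma R_lim:
  assumes a: "a > 0" and n: "n \<ge> 1"
  shows "(\<lambda>i. Gamma (real i + 2 * real n) / Gamma (real i + 2 * real n + a + 2) * real i powr (2+a)) \<longlonglongrightarrow> 1"
proof -
  have "(\<lambda>i. Gamma (real i + real (2*n)) * (real i + 0) powr (2+a) / Gamma (real i + real (2*n) + (2+a))) \<longlonglongrightarrow> 1"
    by (rule gaussG) (use a n in auto)
  then show ?thesis by (simp add: add_ac)
qed

lemma S_lim:
  assumes a: "a > 0" and n: "n \<ge> 1"
  shows "(\<lambda>i. (\<Sum>z\<le>i. conv_pow (T_prob a) n z * (Gamma (real z + 2 * real n + a + 1) / Gamma (real z + 2 * real n))) / ln (real i))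
     \<longlonglongrightarrow> real n * ((1+a)*Gamma(2+a))"
proof (rule cesaro_ln)
  obtain K where K: "K \<ge> 1" "\<And>n i. conv_pow (T_prob a) n i * (real i + 1) powr (2+a) \<le> K^n"
     "\<And>n. (\<lambda>i. conv_pow (T_prob a) n i * (real i + 1) powr (2+a)) \<longlonglongrightarrow> real n * ((1+a)*Gamma(2+a))"
    using local_asymp[OF a] by blast
  define g where "g z = Gamma (real z + real (2*n)) * (real z + 1) powr (1+a) / Gamma (real z + real (2*n) + (1+a))" for z
  have gl: "g \<longlonglongrightarrow> 1" unfolding g_def by (rule gaussG) (use a n in auto)
  have gi: "(\<lambda>z. inverse (g z)) \<longlonglongrightarrow> inverse 1" by (intro tendsto_intros gl) simp
  have zl: "(\<lambda>z. real z / (real z + 1)) \<longlonglongrightarrow> 1" by real_asymp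
  have "(\<lambda>z. (conv_pow (T_prob a) n z * (real z + 1) powr (2+a)) * inverse (g z) * (real z / (real z + 1)))
     \<longlonglongrightarrow> real n * ((1+a)*Gamma(2+a)) * inverse 1 * 1"
    by (intro tendsto_mult K(3) gi zl)
  moreover have "(conv_pow (T_prob a) n z * (real z + 1) powr (2+a)) * inverse (g z) * (real z / (real z + 1))
     = real z * (conv_pow (T_prob a) n z * (Gamma (real z + 2 * real n + a + 1) / Gamma (real z + 2 * real n)))" for z
  proof -
    have G1: "Gamma (real z + 2 * real n) > 0" using n by simp
    have G2: "Gamma (real z + 2 * real n + a + 1) > 0" using n a by (simp add: add_pos_pos)
    have pw: "(real z + 1) powr (2+a) = (real z + 1) powr (1+a) * (real z + 1)"
    proof -
      have "(real z + 1) powr (2+a) = (real z + 1) powr ((1+a) + 1)" by (simp add: add_ac)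
      also have "\<dots> = (real z + 1) powr (1+a) * (real z + 1) powr 1" by (rule powr_add)
      finally show ?thesis by simp
    qed
    have pp: "(real z + 1) powr (1+a) > 0" by simp
    have gz: "g z = Gamma (real z + 2 * real n) * (real z + 1) powr (1+a) / Gamma (real z + 2 * real n + a + 1)"
      unfolding g_def by (simp add: add_ac)
    have alg: "(F * (X * (Z + 1))) * inverse (G1 * X / G2) * (Z / (Z + 1)) = Z * (F * (G2 / G1))"
      if "X > 0" "G1 > 0" "G2 > 0" "Z \<ge> 0" for F X G1 G2 Z :: real
    proof -
      have "Z + 1 > 0" using that by simp
      then have h: "(Z+1) * (Z/(Z+1)) = Z" by simp
      have "(F * (X * (Z + 1))) * inverse (G1 * X / G2) * (Z / (Z + 1)) = F * X * inverse (G1 * X / G2) * ((Z+1) * (Z / (Z + 1)))"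
        by (simp only: mult_ac)
      also have "\<dots> = F * X * Z * inverse (G1 * X / G2)" unfolding h by (simp only: mult_ac)
      also have "\<dots> = Z * (F * (G2 / G1))" using that by (simp add: field_simps)
      finally show ?thesis .
    qed
    show ?thesis unfolding gz pw using alg[OF pp G1 G2, of "real z"] by simp

  qed
  ultimately show "(\<lambda>z. real z * (conv_pow (T_prob a) n z * (Gamma (real z + 2 * real n + a + 1) / Gamma (real z + 2 * real n))))
     \<longlonglongrightarrow> real n * ((1+a)*Gamma(2+a))" by simp
qed




lemma ln_ge1: "i \<ge> 3 \<Longrightarrow> ln (real i) \<ge> 1"
proof -
  assume i: "i \<ge> 3"
  have "exp 1 < (3::real)" using e_less_272 by simp
  then have "exp 1 \<le> real i" using i by linarith
  then have "ln (exp 1) \<le> ln (real i)" by (subst ln_le_cancel_iff) (use i in auto)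
  then show ?thesis by simp
qed

lemma harm_bound: "i \<ge> 3 \<Longrightarrow> (\<Sum>z\<le>i. inverse (real z + 1)) \<le> 3 * ln (real i)"
proof -
  assume i: "i \<ge> 3"
  have h1: "(\<Sum>z\<le>i. inverse (real z + 1)) = harm (Suc i)"
    unfolding harm_altdef lessThan_Suc_atMost by (simp add: add.commute)
  have h2: "harm (Suc i) - ln (real (Suc i)) \<le> harm 1 - ln (real (1::nat))"
    by (rule euler_mascheroni_sequence_decreasing) auto
  have h3: "harm (1::nat) = (1::real)" by (simp add: harm_altdef)
  have h4: "ln (real (Suc i)) \<le> ln (2 * real i)" by (subst ln_le_cancel_iff) (use i in auto)
  have h5: "ln (2 * real i) = ln 2 + ln (real i)" using i by (simp add: ln_mult)
  have h6: "ln (2::real) \<le> ln (real i)" by (subst ln_le_cancel_iff) (use i in auto)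
  have h7: "ln (real i) \<ge> 1" by (rule ln_ge1[OF i])
  have h8: "harm (Suc i) \<le> 1 + ln (real (Suc i))" using h2 h3 by simp
  show ?thesis unfolding h1 using h8 h4 h5 h6 h7 by linarith
qed

lemma R_bound:
  assumes a: "a > 0"
  obtains M where "M > 0" "\<And>n i. n \<ge> 1 \<Longrightarrow> Gamma (real i + 2 * real n) / Gamma (real i + 2 * real n + a + 2) * real i powr (2+a) \<le> M"
    "\<And>n i. n \<ge> 1 \<Longrightarrow> Gamma (real i + 2 * real n) / Gamma (real i + 2 * real n + a + 2) * real i powr (2+a) \<ge> 0"
proof -
  have s: "2 + a > 0" using a by simp
  obtain C where C: "C > 0" "\<And>x::nat. x \<ge> 1 \<Longrightarrow> Gamma (real x) * real x powr (2+a) / Gamma (real x + (2+a)) \<le> C"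
     "\<And>x::nat. x \<ge> 1 \<Longrightarrow> Gamma (real x + (2+a)) / (Gamma (real x) * real x powr (2+a)) \<le> C"
    by (rule gamma_ratio_bounds[OF s]) blast
  show ?thesis
  proof (rule that[OF C(1)])
    fix n i :: nat assume n: "n \<ge> 1"
    define x where "x = i + 2*n"
    have x1: "x \<ge> 1" using n by (simp add: x_def)
    have rx: "real x = real i + 2 * real n" by (simp add: x_def)
    have G1: "Gamma (real x) > 0" using x1 by simp
    have G2: "Gamma (real x + (2+a)) > 0" using x1 a by (simp add: add_pos_pos)
    have ge: "Gamma (real i + 2 * real n) / Gamma (real i + 2 * real n + a + 2) * real i powr (2+a)
        = Gamma (real x) / Gamma (real x + (2+a)) * real i powr (2+a)" by (simp add: rx add_ac)
    have "real i powr (2+a) \<le> real x powr (2+a)" using a by (intro powr_mono2) (auto simp: x_def)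
    then have "Gamma (real x) / Gamma (real x + (2+a)) * real i powr (2+a) \<le> Gamma (real x) / Gamma (real x + (2+a)) * real x powr (2+a)"
      using G1 G2 by (intro mult_left_mono) auto
    also have "\<dots> \<le> C" using C(2)[OF x1] by simp
    finally show "Gamma (real i + 2 * real n) / Gamma (real i + 2 * real n + a + 2) * real i powr (2+a) \<le> C"
      unfolding ge .
    show "Gamma (real i + 2 * real n) / Gamma (real i + 2 * real n + a + 2) * real i powr (2+a) \<ge> 0"
      unfolding ge using G1 G2 by simp
  qed
qed

lemma S_bound:
  assumes a: "a > 0"
  obtains D L where "D > 0" "L > 0" "\<And>n i. n \<ge> 1 \<Longrightarrow> i \<ge> 3 \<Longrightarrow>
     (\<Sum>z\<le>i. conv_pow (T_prob a) n z * (Gamma (real z + 2 * real n + a + 1) / Gamma (real z + 2 * real n))) \<le> D * L^n * ln (real i)"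
   "\<And>n i. n \<ge> 1 \<Longrightarrow> (\<Sum>z\<le>i. conv_pow (T_prob a) n z * (Gamma (real z + 2 * real n + a + 1) / Gamma (real z + 2 * real n))) \<ge> 0"
proof -
  obtain K where K: "K \<ge> 1" "\<And>n i. conv_pow (T_prob a) n i * (real i + 1) powr (2+a) \<le> K^n"
     "\<And>n. (\<lambda>i. conv_pow (T_prob a) n i * (real i + 1) powr (2+a)) \<longlonglongrightarrow> real n * ((1+a)*Gamma(2+a))"
    by (rule local_asymp[OF a]) blast
  have s: "1 + a > 0" using a by simp
  obtain C where C: "C > 0" "\<And>x::nat. x \<ge> 1 \<Longrightarrow> Gamma (real x) * real x powr (1+a) / Gamma (real x + (1+a)) \<le> C"
     "\<And>x::nat. x \<ge> 1 \<Longrightarrow> Gamma (real x + (1+a)) / (Gamma (real x) * real x powr (1+a)) \<le> C"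
    by (rule gamma_ratio_bounds[OF s]) blast
  define L where "L = K * 3 powr (1+a)"
  have L0: "L > 0" using K by (simp add: L_def)
  have f0: "\<And>n z. conv_pow (T_prob a) n z \<ge> 0" by (rule conv_nonneg) (use P_pos[OF a] in \<open>simp add: less_imp_le\<close>)
  have pt: "conv_pow (T_prob a) n z * (Gamma (real z + 2 * real n + a + 1) / Gamma (real z + 2 * real n)) \<le> C * L^n * inverse (real z + 1)"
    and pt0: "conv_pow (T_prob a) n z * (Gamma (real z + 2 * real n + a + 1) / Gamma (real z + 2 * real n)) \<ge> 0"
    if n: "n \<ge> 1" for n z
  proof -
    define x where "x = z + 2*n"
    have x1: "x \<ge> 1" using n by (simp add: x_def)
    have rx: "real x = real z + 2 * real n" by (simp add: x_def)
    have G1: "Gamma (real x) > 0" using x1 by simp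
    have G2: "Gamma (real x + (1+a)) > 0" using x1 a by (simp add: add_pos_pos)
    define \<rho> where "\<rho> = Gamma (real x + (1+a)) / Gamma (real x)"
    have rho: "Gamma (real z + 2 * real n + a + 1) / Gamma (real z + 2 * real n) = \<rho>"
      by (simp add: \<rho>_def rx add_ac)
    have rho0: "\<rho> \<ge> 0" using G1 G2 by (simp add: \<rho>_def)
    have rb: "\<rho> \<le> C * real x powr (1+a)"
    proof -
      have X: "real x powr (1+a) > 0" using x1 by simp
      have "\<rho> = (Gamma (real x + (1+a)) / (Gamma (real x) * real x powr (1+a))) * real x powr (1+a)"
        unfolding \<rho>_def using X G1 by simp
      also have "\<dots> \<le> C * real x powr (1+a)" by (rule mult_right_mono[OF C(3)[OF x1]]) (use X in simp)
      finally show ?thesis .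
    qed
    have xb: "real x powr (1+a) \<le> (3 powr (1+a)) ^ n * (real z + 1) powr (1+a)"
    proof -
      have "real x \<le> (2 * real n + 1) * (real z + 1)" by (simp add: x_def algebra_simps)
      then have h1: "real x powr (1+a) \<le> ((2 * real n + 1) * (real z + 1)) powr (1+a)"
        using a by (intro powr_mono2) auto
      have h2: "((2 * real n + 1) * (real z + 1)) powr (1+a) = (2 * real n + 1) powr (1+a) * (real z + 1) powr (1+a)"
        by (rule powr_mult; simp)
      have n3: "2 * n + 1 \<le> 3^n" by (induction n) auto
      have n3': "2 * real n + 1 \<le> 3^n"
      proof -
        have "real (2 * n + 1) \<le> real (3^n)" using n3 by (simp only: of_nat_le_iff)
        then show ?thesis by simp
      qed
      have h3: "(2 * real n + 1) powr (1+a) \<le> (3^n) powr (1+a)"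
        by (rule powr_mono2) (use a n3' in auto)
      have h4: "(3^n :: real) powr (1+a) = (3 powr (1+a)) ^ n"
      proof -
        have "(3^n::real) = 3 powr (real n)" by (simp add: powr_realpow)
        then have "(3^n::real) powr (1+a) = 3 powr (real n * (1+a))" by (simp add: powr_powr)
        also have "\<dots> = (3 powr (1+a)) powr (real n)" by (simp add: powr_powr mult.commute)
        also have "\<dots> = (3 powr (1+a))^n" by (rule powr_realpow) simp
        finally show ?thesis .
      qed
      have h5: "(2 * real n + 1) powr (1+a) * (real z + 1) powr (1+a) \<le> (3 powr (1+a)) ^ n * (real z + 1) powr (1+a)"
        using h3 unfolding h4 by (rule mult_right_mono) simp
      show ?thesis using h1 h2 h5 by linarith
    qed
    have fb: "conv_pow (T_prob a) n z \<le> K^n / (real z + 1) powr (2+a)"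
      using K(2)[of n z] by (subst pos_le_divide_eq) auto
    have pw: "(real z + 1) powr (2+a) = (real z + 1) powr (1+a) * (real z + 1)"
    proof -
      have "(real z + 1) powr (2+a) = (real z + 1) powr ((1+a) + 1)" by (simp add: add_ac)
      also have "\<dots> = (real z + 1) powr (1+a) * (real z + 1) powr 1" by (rule powr_add)
      finally show ?thesis by simp
    qed
    have "conv_pow (T_prob a) n z * \<rho> \<le> (K^n / (real z + 1) powr (2+a)) * (C * ((3 powr (1+a)) ^ n * (real z + 1) powr (1+a)))"
    proof (intro mult_mono fb rho0)
      show "\<rho> \<le> C * ((3 powr (1 + a)) ^ n * (real z + 1) powr (1 + a))"
        using rb xb C(1) by (meson mult_left_mono order_trans less_imp_le)
      show "0 \<le> K ^ n / (real z + 1) powr (2 + a)" using K by simp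
    qed
    also have "\<dots> = C * L^n * inverse (real z + 1)"
    proof -
      have X: "(real z + 1) powr (1+a) > 0" by simp
      have Z: "real z + 1 > 0" by simp
      have alg: "(A / (X * Z1)) * (C * (B * X)) = C * (A * B) * inverse Z1" if "X > 0" "Z1 > 0" for A B X Z1 :: real
        using that by (simp add: field_simps)
      show ?thesis unfolding pw L_def power_mult_distrib
        by (rule alg[of "(real z + 1) powr (1+a)" "real z + 1" "K^n" "(3 powr (1+a)) ^ n", OF X Z])
    qed
    finally show "conv_pow (T_prob a) n z * (Gamma (real z + 2 * real n + a + 1) / Gamma (real z + 2 * real n)) \<le> C * L^n * inverse (real z + 1)"
      unfolding rho .
    show "conv_pow (T_prob a) n z * (Gamma (real z + 2 * real n + a + 1) / Gamma (real z + 2 * real n)) \<ge> 0"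
      unfolding rho using f0 rho0 by simp
  qed
  show ?thesis
  proof (rule that[of "3 * C" L])
    show "3 * C > 0" "L > 0" using C L0 by auto
    fix n i :: nat assume n: "n \<ge> 1"
    show "(\<Sum>z\<le>i. conv_pow (T_prob a) n z * (Gamma (real z + 2 * real n + a + 1) / Gamma (real z + 2 * real n))) \<ge> 0"
      by (intro sum_nonneg pt0 n)
    assume i: "i \<ge> 3"
    have "(\<Sum>z\<le>i. conv_pow (T_prob a) n z * (Gamma (real z + 2 * real n + a + 1) / Gamma (real z + 2 * real n)))
       \<le> (\<Sum>z\<le>i. C * L^n * inverse (real z + 1))" by (intro sum_mono pt n)
    also have "\<dots> = C * L^n * (\<Sum>z\<le>i. inverse (real z + 1))" by (simp add: sum_distrib_left)
    also have "\<dots> \<le> C * L^n * (3 * ln (real i))"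
      using harm_bound[OF i] C L0 by (intro mult_left_mono) auto
    finally show "(\<Sum>z\<le>i. conv_pow (T_prob a) n z * (Gamma (real z + 2 * real n + a + 1) / Gamma (real z + 2 * real n))) \<le> 3 * C * L ^ n * ln (real i)"
      by (simp add: mult_ac)
  qed
qed




lemma poisson_nonneg: "lam > 0 \<Longrightarrow> poisson_prob lam n \<ge> 0"
  unfolding poisson_prob_def by simp

lemma poisson_mean:
  assumes "lam > 0"
  shows "(\<lambda>n. poisson_prob lam n * real n) sums lam"
proof -
  define g where "g n = poisson_prob lam n * real n" for n
  have e: "(\<lambda>n. lam^n / fact n) sums exp lam"
    using exp_converges[of lam] by (simp add: divide_inverse mult.commute)
  have "(\<lambda>n. (lam * exp (-lam)) * (lam^n / fact n)) sums ((lam * exp (-lam)) * exp lam)"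
    by (rule sums_mult[OF e])
  moreover have "(lam * exp (-lam)) * exp lam = lam" by (simp add: exp_minus field_simps)
  moreover have "g (Suc n) = (lam * exp (-lam)) * (lam^n / fact n)" for n
  proof -
    have alg: "X * (lam * P) / (N * F) * N = (lam * X) * (P / F)" if "N > 0" "F > 0" for X P N F :: real
      using that by (simp add: field_simps)
    have "g (Suc n) = exp (- lam) * (lam * lam ^ n) / (real (Suc n) * fact n) * real (Suc n)"
      unfolding g_def poisson_prob_def by (simp only: fact_Suc power_Suc of_nat_mult)
    also have "\<dots> = (lam * exp (-lam)) * (lam^n / fact n)" by (rule alg) auto
    finally show ?thesis .
  qed
  ultimately have "(\<lambda>n. g (Suc n)) sums lam" by simp
  then have "g sums (lam + g 0)" by (simp add: sums_Suc_iff)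
  then show ?thesis by (simp add: g_def[abs_def])
qed

theorem mainTheorem2:
  fixes lam :: real and k :: nat
  assumes "lam > 0" and "k \<ge> 1"
  shows "(\<lambda>i. y_seq lam k i) \<sim>[sequentially]
    (\<lambda>i. lam * (1 + real k / lam)^2 * Gamma (2 + real k / lam)
          * real i powr (-2 - real k / lam) * ln (real i))"
proof -
  define a where "a = real k / lam"
  have a: "a > 0" using assms by (simp add: a_def)
  define c where "c = (1+a)*Gamma(2+a)"
  have c0: "c > 0" using a by (simp add: c_def add_pos_pos)
  define R where "R n i = Gamma (real i + 2 * real n) / Gamma (real i + 2 * real n + a + 2)" for n i :: nat
  define S where "S n i = (\<Sum>z\<le>i. conv_pow (T_prob a) n z * (Gamma (real z + 2 * real n + a + 1) / Gamma (real z + 2 * real n)))" for n i :: nat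
  define tm where "tm n i = (if n \<ge> 1 then poisson_prob lam n * ((R n i * real i powr (2+a)) * (S n i / ln (real i))) else 0)" for n i :: nat
  define inner where "inner n i = (if n \<ge> 1 then poisson_prob lam n * (R n i * S n i) else 0)" for n i :: nat
  define b where "b n = poisson_prob lam n * real n * c" for n
  obtain M1 where M1: "M1 > 0" "\<And>n i. n \<ge> 1 \<Longrightarrow> Gamma (real i + 2 * real n) / Gamma (real i + 2 * real n + a + 2) * real i powr (2+a) \<le> M1"
    "\<And>n i. n \<ge> 1 \<Longrightarrow> Gamma (real i + 2 * real n) / Gamma (real i + 2 * real n + a + 2) * real i powr (2+a) \<ge> 0"
    by (rule R_bound[OF a]) blast
  obtain D L where DL: "D > 0" "L > 0" "\<And>n i. n \<ge> 1 \<Longrightarrow> i \<ge> 3 \<Longrightarrow>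
     (\<Sum>z\<le>i. conv_pow (T_prob a) n z * (Gamma (real z + 2 * real n + a + 1) / Gamma (real z + 2 * real n))) \<le> D * L^n * ln (real i)"
   "\<And>n i. n \<ge> 1 \<Longrightarrow> (\<Sum>z\<le>i. conv_pow (T_prob a) n z * (Gamma (real z + 2 * real n + a + 1) / Gamma (real z + 2 * real n))) \<ge> 0"
    by (rule S_bound[OF a]) blast
  define M where "M n = poisson_prob lam n * (M1 * (D * L^n))" for n
  have lim_tm: "(\<lambda>i. tm n i) \<longlonglongrightarrow> b n" for n
  proof (cases "n \<ge> 1")
    case True
    have "(\<lambda>i. poisson_prob lam n * ((R n i * real i powr (2+a)) * (S n i / ln (real i)))) \<longlonglongrightarrow> poisson_prob lam n * (1 * (real n * c))"
      unfolding R_def S_def c_def by (intro tendsto_mult tendsto_const R_lim[OF a True] S_lim[OF a True])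
    then show ?thesis using True by (simp add: tm_def b_def mult_ac)
  next
    case False
    then have "n = 0" by simp
    then show ?thesis by (simp add: tm_def b_def)
  qed
  have bnd_tm: "norm (tm n i) \<le> M n" if i: "i \<ge> 3" for n i
  proof (cases "n \<ge> 1")
    case True
    have lnp: "ln (real i) \<ge> 1" by (rule ln_ge1[OF i])
    have r0: "R n i * real i powr (2+a) \<ge> 0" "R n i * real i powr (2+a) \<le> M1"
      using M1(2,3)[OF True, of i] by (simp_all add: R_def)
    have s0: "S n i / ln (real i) \<ge> 0" using DL(4)[OF True, of i] lnp by (simp add: S_def)
    have s1: "S n i / ln (real i) \<le> D * L^n"
      using DL(3)[OF True i] lnp by (simp add: S_def pos_divide_le_eq)
    define X where "X = (R n i * real i powr (2+a)) * (S n i / ln (real i))"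
    have Xle: "X \<le> M1 * (D * L^n)" unfolding X_def
      by (rule mult_mono[OF r0(2) s1]) (use M1 s0 in auto)
    have X0: "X \<ge> 0" unfolding X_def by (rule mult_nonneg_nonneg[OF r0(1) s0])
    have pn: "poisson_prob lam n \<ge> 0" by (rule poisson_nonneg[OF assms(1)])
    have tmv: "tm n i = poisson_prob lam n * X" using True by (simp add: tm_def X_def)
    show ?thesis unfolding tmv M_def real_norm_def abs_of_nonneg[OF mult_nonneg_nonneg[OF pn X0]]
      by (rule mult_left_mono[OF Xle pn])
  next
    case False
    then show ?thesis using poisson_nonneg[OF assms(1), of n] M1 DL by (simp add: tm_def M_def)
  qed
  have sumM: "summable M"
  proof -
    have "summable (\<lambda>n. (exp (-lam) * M1 * D) * (inverse (fact n) * (lam * L)^n))"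
      by (intro summable_mult summable_exp)
    moreover have "(exp (-lam) * M1 * D) * (inverse (fact n) * (lam * L)^n) = M n" for n
      by (simp add: M_def poisson_prob_def power_mult_distrib field_simps)
    ultimately show ?thesis by simp
  qed
  have bsum: "b sums (lam * c)"
    unfolding b_def using sums_mult2[OF poisson_mean[OF assms(1)], of c] .
  have ev: "eventually (\<lambda>(n, i). norm (tm n i) \<le> M n) (at_top \<times>\<^sub>F sequentially)"
    unfolding eventually_prod_sequentially using bnd_tm by (intro exI[of _ 3]) auto
  have TT: "eventually (\<lambda>i. summable (\<lambda>n. norm (tm n i))) sequentially \<and>
           summable (\<lambda>n. norm (b n)) \<and> ((\<lambda>i. suminf (\<lambda>n. tm n i)) \<longlonglongrightarrow> suminf b)"
    by (rule tannerys_theorem[where a=tm and M=M and b=b and F=sequentially, OF lim_tm ev sumM]) simp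
  have Tl: "(\<lambda>i. (\<Sum>n. tm n i) / (lam * c)) \<longlonglongrightarrow> (lam * c) / (lam * c)"
    using TT bsum assms(1) c0 by (intro tendsto_divide) (auto simp: sums_iff)
  then have Tl1: "(\<lambda>i. (\<Sum>n. tm n i) / (lam * c)) \<longlonglongrightarrow> 1" using assms(1) c0 by simp
  have ydef: "y_seq lam k i = (1+a) * (\<Sum>n. inner n i)" for i
  proof -
    have "(\<lambda>n. if n \<ge> 1 then poisson_prob lam n *
        (\<Sum>z\<le>i. conv_pow (T_prob a) n z *
           (Gamma (real i + 2 * real n) / Gamma (real i + 2 * real n + a + 2)) *
           (Gamma (real z + 2 * real n + a + 1) / Gamma (real z + 2 * real n)))
      else 0) = (\<lambda>n. inner n i)"
      by (rule ext) (simp add: inner_def R_def S_def sum_distrib_left mult_ac)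
    then show ?thesis unfolding y_seq_def Let_def a_def[symmetric] by simp
  qed
  have ev2: "eventually (\<lambda>i. summable (\<lambda>n. norm (tm n i)) \<and> 3 \<le> i) sequentially"
    by (rule eventually_conj[OF conjunct1[OF TT] eventually_ge_at_top])
  have eq: "eventually (\<lambda>i. y_seq lam k i / (lam * (1 + real k / lam)^2 * Gamma (2 + real k / lam)
          * real i powr (-2 - real k / lam) * ln (real i)) = (\<Sum>n. tm n i) / (lam * c)) sequentially"
  proof (rule eventually_mono[OF ev2])
    fix i :: nat assume h: "summable (\<lambda>n. norm (tm n i)) \<and> 3 \<le> i"
    have i3: "i \<ge> 3" using h by simp
    have st: "summable (\<lambda>n. tm n i)" by (rule summable_norm_cancel) (use h in simp)
    have lnp: "ln (real i) > 0" using ln_ge1[OF i3] by simp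
    have Ep: "real i powr (2+a) > 0" using i3 by simp
    define \<kappa> where "\<kappa> = real i powr (2+a) / ln (real i)"
    have kp: "\<kappa> > 0" using lnp Ep by (simp add: \<kappa>_def)
    have inn: "inner n i = tm n i / \<kappa>" for n
      using kp lnp Ep by (simp add: inner_def tm_def \<kappa>_def field_simps)
    have si: "(\<Sum>n. inner n i) = (\<Sum>n. tm n i) / \<kappa>"
      unfolding inn by (rule suminf_divide[OF st])
    have pw: "real i powr (-2 - a) = inverse (real i powr (2+a))"
      by (simp add: powr_minus[symmetric])
    have Gp: "Gamma (2+a) > 0" using a by (simp add: add_pos_pos)
    have alg: "(A * (T / (E / Lg))) / (lam * A^2 * G * inverse E * Lg) = T / (lam * (A * G))"
      if "A > 0" "E > 0" "Lg > 0" "G > 0" for A T E Lg G :: real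
      using that assms(1) by (simp add: field_simps power2_eq_square)
    show "y_seq lam k i / (lam * (1 + real k / lam)^2 * Gamma (2 + real k / lam)
          * real i powr (-2 - real k / lam) * ln (real i)) = (\<Sum>n. tm n i) / (lam * c)"
      unfolding ydef si a_def[symmetric] pw \<kappa>_def c_def
      using alg[of "1+a" "real i powr (2+a)" "ln (real i)" "Gamma (2+a)" "\<Sum>n. tm n i"] a Ep lnp Gp
      by simp
  qed
  show ?thesis
    by (rule asymp_equivI') (use Tl1 eq tendsto_cong in fastforce)
qed


end
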